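(* Fix $p\in(0,1/2]$, an integer $k\ge 1$, and $\epsilon>0$. There exist $c=c(p,k,\epsilon)>0$ and $n_0=n_0(p,k,\epsilon)$ such that the following holds. Let $n\ge n_0$, let $M$ be an $(n-k)\times n$ random matrix with independent $\operatorname{Ber}(p)$ entries, and let $V$ be a (deterministic) $n\times k$ real matrix with orthonormal columns. Then \[\mathbb{P}\big[\|MV\|_{\operatorname{HS}}\le c\sqrt{n}\big]\le (1-p+\epsilon)^{kn}.\]
   Context: $\operatorname{Ber}(p)$ takes value $1$ with probability $p$ and $0$ with probability $1-p$. For a matrix $A=(A_{ij})$, $\|A\|_{\operatorname{HS}}^2=\sum_{i,j}A_{ij}^2$ (Hilbert–Schmidt norm). *)

theory Defs
  imports "HOL-Probability.Probability"
begin

text \<open>An m x n random matrix with independent Ber(p) entries, represented as a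
  function from index pairs (i,j), i < m, j < n, to bool (True = entry 1).
  Outside the index range the entry is the default value False.\<close>
definition ber_matrix_pmf :: "nat \<Rightarrow> nat \<Rightarrow> real \<Rightarrow> (nat \<times> nat \<Rightarrow> bool) pmf" where
  "ber_matrix_pmf m n p = Pi_pmf ({..<m} \<times> {..<n}) False (\<lambda>_. bernoulli_pmf p)"

definition entry :: "(nat \<times> nat \<Rightarrow> bool) \<Rightarrow> nat \<Rightarrow> nat \<Rightarrow> real" where
  "entry M i j = of_bool (M (i, j))"

definition orthonormal_cols :: "nat \<Rightarrow> nat \<Rightarrow> (nat \<Rightarrow> nat \<Rightarrow> real) \<Rightarrow> bool" where
  "orthonormal_cols n k V \<longleftrightarrow>
     (\<forall>a<k. \<forall>b<k. (\<Sum>l<n. V l a * V l b) = (if a = b then 1 else 0))"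

definition hs_norm_prod :: "nat \<Rightarrow> nat \<Rightarrow> nat \<Rightarrow> (nat \<times> nat \<Rightarrow> bool) \<Rightarrow> (nat \<Rightarrow> nat \<Rightarrow> real) \<Rightarrow> real" where
  "hs_norm_prod m n k M V =
     sqrt (\<Sum>i<m. \<Sum>j<k. (\<Sum>l<n. entry M i l * V l j)\<^sup>2)"

end

theory Submission
  imports Defs
begin


lemma cos_upper4: "cos (x::real) \<le> 1 - x^2/2 + x^4/24"
proof -
  obtain t where 1: "cos x = (\<Sum>m<4. cos_coeff m * x ^ m) + (cos(t + 1/2 * real 4 * pi) / fact 4) * x ^ 4"
    using Maclaurin_cos_expansion[of x 4] by blast
  have 2: "(\<Sum>m<4. cos_coeff m * x ^ m) = 1 - x^2/2"
    by (simp add: eval_nat_numeral cos_coeff_def) presburger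
  have 3: "cos(t + 1/2 * real 4 * pi) * x^4 \<le> 1 * x^4"
    by (rule mult_right_mono) (simp_all add: zero_le_even_power)
  have "(fact 4::real) = 24" by (simp add: eval_nat_numeral)
  with 1 2 3 show ?thesis by simp
qed

lemma cos_lower2: "cos (x::real) \<ge> 1 - x^2/2"
proof -
  obtain t where 1: "cos x = (\<Sum>m<2. cos_coeff m * x ^ m) + (cos(t + 1/2 * real 2 * pi) / fact 2) * x ^ 2"
    using Maclaurin_cos_expansion[of x 2] by blast
  have 2: "(\<Sum>m<2. cos_coeff m * x ^ m) = 1"
    by (simp add: eval_nat_numeral cos_coeff_def)
  have 3: "cos(t + 1/2 * real 2 * pi) * x^2 \<ge> (-1) * x^2"
    by (rule mult_right_mono) simp_all
  have "(fact 2::real) = 2" by (simp add: eval_nat_numeral)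
  with 1 2 3 show ?thesis by simp
qed

lemma one_minus_cos_ge: assumes "\<bar>x::real\<bar> \<le> 1" shows "1 - cos x \<ge> x^2/4"
proof -
  have "x^4 = x^2 * x^2" by algebra
  moreover have "x^2 \<le> 1" using assms by (metis abs_ge_zero power2_abs power_le_one)
  moreover have "x^2 \<ge> 0" by simp
  ultimately have "x^4 \<le> x^2" by (metis mult_left_le) 
  thus ?thesis using cos_upper4[of x] \<open>x^2 \<ge> 0\<close> by linarith
qed



lemma finite_set_Pi_bool:
  assumes "finite A" shows "finite (set_pmf (Pi_pmf A d (q :: _ \<Rightarrow> bool pmf)))"
proof -
  have "finite (PiE_dflt A d (set_pmf \<circ> q))"
  proof (rule finite_PiE_dflt[OF assms])
    fix x show "finite ((set_pmf \<circ> q) x)" by (rule finite_subset[OF subset_UNIV]) simp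
  qed
  thus ?thesis by (rule finite_subset[OF set_Pi_pmf_subset'[OF assms]])
qed

lemma integral_pair_pmf_fin:
  fixes g :: "'a \<times> 'b \<Rightarrow> 'c::{banach, second_countable_topology}"
  assumes A: "finite (set_pmf A)" and B: "finite (set_pmf B)"
  shows "measure_pmf.expectation (pair_pmf A B) g =
         measure_pmf.expectation A (\<lambda>a. measure_pmf.expectation B (\<lambda>b. g (a,b)))"
proof -
  have e1: "measure_pmf.expectation (pair_pmf A B) g = (\<Sum>x\<in>set_pmf A \<times> set_pmf B. pmf (pair_pmf A B) x *\<^sub>R g x)"
    by (rule integral_measure_pmf) (use A B in simp_all)
  have e2: "(\<Sum>x\<in>set_pmf A \<times> set_pmf B. pmf (pair_pmf A B) x *\<^sub>R g x) = (\<Sum>(a,b)\<in>set_pmf A \<times> set_pmf B. (pmf A a * pmf B b) *\<^sub>R g (a,b))"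
    by (intro sum.cong refl) (auto simp: pmf_pair)
  have e3: "(\<Sum>(a,b)\<in>set_pmf A \<times> set_pmf B. (pmf A a * pmf B b) *\<^sub>R g (a,b)) = (\<Sum>a\<in>set_pmf A. \<Sum>b\<in>set_pmf B. (pmf A a * pmf B b) *\<^sub>R g (a,b))"
    by (rule sum.cartesian_product[symmetric])
  have e4: "(\<Sum>a\<in>set_pmf A. \<Sum>b\<in>set_pmf B. (pmf A a * pmf B b) *\<^sub>R g (a,b)) = (\<Sum>a\<in>set_pmf A. pmf A a *\<^sub>R (\<Sum>b\<in>set_pmf B. pmf B b *\<^sub>R g (a,b)))"
    by (simp add: scaleR_sum_right)
  have e5: "measure_pmf.expectation B (\<lambda>b. g (a,b)) = (\<Sum>b\<in>set_pmf B. pmf B b *\<^sub>R g (a,b))" for a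
    by (rule integral_measure_pmf[OF B]) simp
  have e6: "measure_pmf.expectation A (\<lambda>a. measure_pmf.expectation B (\<lambda>b. g (a,b))) = (\<Sum>a\<in>set_pmf A. pmf A a *\<^sub>R measure_pmf.expectation B (\<lambda>b. g (a,b)))"
    by (rule integral_measure_pmf[OF A]) simp
  show ?thesis
    unfolding e1 e2 e3 e4 e6 by (simp only: e5)
qed

lemma integral_bern:
  fixes h :: "bool \<Rightarrow> 'c::{banach, second_countable_topology}"
  assumes "0 \<le> p" "p \<le> 1"
  shows "measure_pmf.expectation (bernoulli_pmf p) h = (1-p) *\<^sub>R h False + p *\<^sub>R h True"
  by (subst integral_measure_pmf[of UNIV]) (use assms in \<open>auto simp: UNIV_bool\<close>)

lemma E_insert:
  fixes h :: "('i \<Rightarrow> bool) \<Rightarrow> 'c::{banach, second_countable_topology}"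
  assumes "finite L" "l \<notin> L" "0 \<le> p" "p \<le> 1"
  shows "measure_pmf.expectation (Pi_pmf (insert l L) False (\<lambda>_. bernoulli_pmf p)) h =
    (1-p) *\<^sub>R measure_pmf.expectation (Pi_pmf L False (\<lambda>_. bernoulli_pmf p)) (\<lambda>f. h (f(l:=False)))
    + p *\<^sub>R measure_pmf.expectation (Pi_pmf L False (\<lambda>_. bernoulli_pmf p)) (\<lambda>f. h (f(l:=True)))"
proof -
  have fb: "finite (set_pmf (bernoulli_pmf p))" by (rule finite_subset[OF subset_UNIV]) simp
  show ?thesis
    apply (subst Pi_pmf_insert[OF assms(1,2)])
    apply (subst integral_map_pmf)
    apply (subst integral_pair_pmf_fin[OF fb finite_set_Pi_bool[OF assms(1)]])
    apply (subst integral_bern[OF assms(3,4)])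
    apply (simp only: case_prod_conv)
    done
qed

lemma E_indicator: "measure_pmf.expectation M (indicator A) = measure_pmf.prob M A"
  by simp

lemma prob_insert:
  assumes "finite L" "l \<notin> L" "0 \<le> p" "p \<le> 1"
  shows "measure_pmf.prob (Pi_pmf (insert l L) False (\<lambda>_. bernoulli_pmf p)) E =
    (1-p) * measure_pmf.prob (Pi_pmf L False (\<lambda>_. bernoulli_pmf p)) {f. f(l:=False) \<in> E}
    + p * measure_pmf.prob (Pi_pmf L False (\<lambda>_. bernoulli_pmf p)) {f. f(l:=True) \<in> E}"
proof -
  have 1: "measure_pmf.prob (Pi_pmf (insert l L) False (\<lambda>_. bernoulli_pmf p)) E =
     measure_pmf.expectation (Pi_pmf (insert l L) False (\<lambda>_. bernoulli_pmf p)) (indicator E)"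
    by (rule E_indicator[symmetric])
  have 2: "measure_pmf.expectation (Pi_pmf (insert l L) False (\<lambda>_. bernoulli_pmf p)) (indicator E :: _ \<Rightarrow> real) = (1-p) *\<^sub>R measure_pmf.expectation (Pi_pmf L False (\<lambda>_. bernoulli_pmf p)) (\<lambda>f. indicator E (f(l:=False)))
    + p *\<^sub>R measure_pmf.expectation (Pi_pmf L False (\<lambda>_. bernoulli_pmf p)) (\<lambda>f. indicator E (f(l:=True)))"
    by (rule E_insert[OF assms])
  have 3: "(\<lambda>f. indicator E (f(l:=b))) = (indicator {f. f(l:=b) \<in> E} :: _ \<Rightarrow> real)" for b
    unfolding indicator_def by simp
  have 4: "measure_pmf.expectation (Pi_pmf L False (\<lambda>_. bernoulli_pmf p)) (\<lambda>f. indicator E (f(l:=b)))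
     = measure_pmf.prob (Pi_pmf L False (\<lambda>_. bernoulli_pmf p)) {f. f(l:=b) \<in> E}" for b
    by (simp only: 3 E_indicator)
  show ?thesis unfolding 1 2 4 real_scaleR_def ..
qed



definition S1 :: "'i set \<Rightarrow> ('i \<Rightarrow> real) \<Rightarrow> ('i \<Rightarrow> bool) \<Rightarrow> real" where
  "S1 L c r = (\<Sum>l\<in>L. if r l then c l else 0)"

lemma S1_upd:
  assumes "finite L" "l \<notin> L"
  shows "S1 (insert l L) c (f(l:=y)) = (if y then c l else 0) + S1 L c f"
proof -
  have "(\<Sum>m\<in>L. if (f(l:=y)) m then c m else 0) = (\<Sum>m\<in>L. if f m then c m else 0)"
    by (rule sum.cong) (use assms in auto)
  thus ?thesis using assms by (simp add: S1_def)
qed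

lemma charfun:
  assumes "finite L" "0 \<le> p" "p \<le> 1"
  shows "measure_pmf.expectation (Pi_pmf L False (\<lambda>_. bernoulli_pmf p)) (\<lambda>r. cis (t * S1 L c r))
     = (\<Prod>l\<in>L. complex_of_real (1-p) + complex_of_real p * cis (t * c l))"
  using assms(1)
proof (induction L rule: finite_induct)
  case empty
  then show ?case by (simp add: S1_def)
next
  case (insert l L)
  have e: "measure_pmf.expectation (Pi_pmf (insert l L) False (\<lambda>_. bernoulli_pmf p)) (\<lambda>r. cis (t * S1 (insert l L) c r))
    = (1-p) *\<^sub>R measure_pmf.expectation (Pi_pmf L False (\<lambda>_. bernoulli_pmf p)) (\<lambda>f. cis (t * S1 L c f))
      + p *\<^sub>R measure_pmf.expectation (Pi_pmf L False (\<lambda>_. bernoulli_pmf p)) (\<lambda>f. cis (t * c l) * cis (t * S1 L c f))"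
    by (subst E_insert[OF insert.hyps(1,2) assms(2,3)]) (simp add: S1_upd[OF insert.hyps(1,2)] cis_mult distrib_left)
  also have "measure_pmf.expectation (Pi_pmf L False (\<lambda>_. bernoulli_pmf p)) (\<lambda>f. cis (t * c l) * cis (t * S1 L c f))
     = cis (t * c l) * measure_pmf.expectation (Pi_pmf L False (\<lambda>_. bernoulli_pmf p)) (\<lambda>f. cis (t * S1 L c f))"
    by (rule integral_mult_right_zero)
  finally show ?case using insert by (simp add: scaleR_conv_of_real algebra_simps)
qed

lemma phi_bound:
  assumes "0 \<le> p" "p \<le> 1" "\<bar>\<theta>\<bar> \<le> 1"
  shows "cmod (complex_of_real (1-p) + complex_of_real p * cis \<theta>) \<le> exp (-(p*(1-p)*\<theta>^2/4))"
proof -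
  define z where "z = complex_of_real (1-p) + complex_of_real p * cis \<theta>"
  have "(cmod z)^2 = (1-p+p*cos \<theta>)^2 + (p * sin \<theta>)^2"
    by (simp add: z_def cmod_power2)
  also have "\<dots> = 1 - 2*p*(1-p)*(1 - cos \<theta>)"
  proof -
    have s: "sin \<theta> * sin \<theta> = 1 - cos \<theta> * cos \<theta>"
      using sin_cos_squared_add3[of \<theta>] by linarith
    show ?thesis by (simp add: power2_eq_square algebra_simps s)
  qed
  also have "\<dots> \<le> 1 - 2*p*(1-p)*(\<theta>^2/4)"
    using one_minus_cos_ge[OF assms(3)] assms(1,2) by (intro diff_left_mono mult_left_mono) auto
  also have "\<dots> \<le> exp (-(p*(1-p)*\<theta>^2/2))"
    using exp_ge_add_one_self[of "-(p*(1-p)*\<theta>^2/2)"] by simp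
  also have "\<dots> = (exp (-(p*(1-p)*\<theta>^2/4)))^2"
    by (simp add: exp_double[symmetric] power2_eq_square exp_add[symmetric])
  finally have "(cmod z)^2 \<le> (exp (-(p*(1-p)*\<theta>^2/4)))^2" .
  thus ?thesis unfolding z_def[symmetric] by (rule power2_le_imp_le) simp
qed

lemma prod_phi_bound:
  assumes "finite L" "0 \<le> p" "p \<le> 1" "(\<Sum>l\<in>L. (c l)^2) = 1" "\<And>l. l \<in> L \<Longrightarrow> \<bar>t * c l\<bar> \<le> 1"
  shows "cmod (\<Prod>l\<in>L. complex_of_real (1-p) + complex_of_real p * cis (t * c l)) \<le> exp (-(p*(1-p)/4*t^2))"
proof -
  have "cmod (\<Prod>l\<in>L. complex_of_real (1-p) + complex_of_real p * cis (t * c l))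
      = (\<Prod>l\<in>L. cmod (complex_of_real (1-p) + complex_of_real p * cis (t * c l)))"
    by (rule prod_norm[symmetric])
  also have "\<dots> \<le> (\<Prod>l\<in>L. exp (-(p*(1-p)*(t * c l)^2/4)))"
    by (rule prod_mono) (use phi_bound[OF assms(2,3)] assms(5) in auto)
  also have "\<dots> = exp (\<Sum>l\<in>L. -(p*(1-p)*(t * c l)^2/4))"
    by (rule exp_sum[OF assms(1), symmetric])
  also have "(\<Sum>l\<in>L. -(p*(1-p)*(t * c l)^2/4)) = -(p*(1-p)/4*t^2) * (\<Sum>l\<in>L. (c l)^2)"
  proof -
    have "-(p*(1-p)*(t * c l)^2/4) = -(p*(1-p)/4*t^2) * (c l)^2" for l
      by (simp add: power_mult_distrib)
    thus ?thesis by (simp only: sum_distrib_left)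
  qed
  finally show ?thesis using assms(4) by simp
qed

lemma Ecos_bound:
  assumes "finite L" "0 \<le> p" "p \<le> 1" "(\<Sum>l\<in>L. (c l)^2) = 1" "\<And>l. l \<in> L \<Longrightarrow> \<bar>t * c l\<bar> \<le> 1"
  shows "measure_pmf.expectation (Pi_pmf L False (\<lambda>_. bernoulli_pmf p)) (\<lambda>r. cos (t * (S1 L c r - b)))
     \<le> exp (-(p*(1-p)/4*t^2))"
proof -
  let ?M = "Pi_pmf L False (\<lambda>_. bernoulli_pmf p)"
  have int: "integrable (measure_pmf ?M) f" for f :: "_ \<Rightarrow> complex"
    by (rule integrable_measure_pmf_finite[OF finite_set_Pi_bool[OF assms(1)]])
  have "measure_pmf.expectation ?M (\<lambda>r. cos (t * (S1 L c r - b)))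
      = measure_pmf.expectation ?M (\<lambda>r. Re (cis (-(t*b)) * cis (t * S1 L c r)))"
    by (simp add: cis_mult algebra_simps)
  also have "\<dots> = Re (measure_pmf.expectation ?M (\<lambda>r. cis (-(t*b)) * cis (t * S1 L c r)))"
    by (rule integral_Re[OF int])
  also have "measure_pmf.expectation ?M (\<lambda>r. cis (-(t*b)) * cis (t * S1 L c r))
      = cis (-(t*b)) * measure_pmf.expectation ?M (\<lambda>r. cis (t * S1 L c r))"
    by (rule integral_mult_right_zero)
  also have "Re \<dots> \<le> cmod \<dots>" by (rule complex_Re_le_cmod)
  also have "\<dots> = cmod (measure_pmf.expectation ?M (\<lambda>r. cis (t * S1 L c r)))"
    by (simp add: norm_mult)
  also have "\<dots> \<le> exp (-(p*(1-p)/4*t^2))"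
    unfolding charfun[OF assms(1,2,3)] by (rule prod_phi_bound[OF assms])
  finally show ?thesis .
qed

lemma kernel_nonneg:
  "0 \<le> (\<Sum>j<N. \<Sum>j'<N. cos ((real j - real j') * x))"
proof -
  have "(\<Sum>j<N. \<Sum>j'<N. cos ((real j - real j') * x))
      = (\<Sum>j<N. \<Sum>j'<N. cos (real j * x) * cos (real j' * x) + sin (real j * x) * sin (real j' * x))"
    by (simp add: left_diff_distrib cos_diff)
  also have "\<dots> = (\<Sum>j<N. cos (real j * x))^2 + (\<Sum>j<N. sin (real j * x))^2"
    by (simp add: power2_eq_square sum_product sum.distrib)
  finally show ?thesis by simp
qed

lemma kernel_large:
  assumes "\<bar>x\<bar> * real N \<le> 1/2"
  shows "real N ^ 2 / 2 \<le> (\<Sum>j<N. \<Sum>j'<N. cos ((real j - real j') * x))"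
proof -
  have "1/2 \<le> cos ((real j - real j') * x)" if "j < N" "j' < N" for j j'
  proof -
    have "\<bar>real j - real j'\<bar> \<le> real N" using that by linarith
    hence "\<bar>(real j - real j') * x\<bar> \<le> real N * \<bar>x\<bar>"
      by (simp add: abs_mult mult_right_mono)
    hence a: "\<bar>(real j - real j') * x\<bar> \<le> 1/2" using assms by (simp add: mult.commute)
    hence "((real j - real j') * x)^2 \<le> (1/2)^2"
      by (metis abs_ge_zero power2_abs power_mono)
    moreover have "(1/2::real)^2 = 1/4" by (simp add: power2_eq_square)
    ultimately show ?thesis using cos_lower2[of "(real j - real j') * x"] by linarith
  qed
  hence "(\<Sum>j<N. \<Sum>j'<N. (1/2::real)) \<le> (\<Sum>j<N. \<Sum>j'<N. cos ((real j - real j') * x))"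
    by (intro sum_mono) auto
  thus ?thesis by (simp add: power2_eq_square)
qed



lemma geom_inj:
  fixes x :: real
  assumes "0 \<le> x" "x < 1" "finite I" "inj_on g I"
  shows "(\<Sum>i\<in>I. x ^ g i) \<le> 1 / (1 - x)"
proof -
  obtain M where M: "g ` I \<subseteq> {..<M}"
    using finite_nat_iff_bounded[of "g ` I"] assms(3) by blast
  have "(\<Sum>i\<in>I. x ^ g i) = (\<Sum>m\<in>g ` I. x ^ m)"
    by (simp add: sum.reindex[OF assms(4)])
  also have "\<dots> \<le> (\<Sum>m<M. x ^ m)"
    by (rule sum_mono2) (use M assms(1) in auto)
  also have "\<dots> = (1 - x ^ M) / (1 - x)"
    using assms(2) by (simp add: sum_gp_strict)
  also have "\<dots> \<le> 1 / (1 - x)"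
    using assms(1,2) by (intro divide_right_mono) auto
  finally show ?thesis .
qed

lemma geom_row:
  fixes x :: real
  assumes "0 \<le> x" "x < 1"
  shows "(\<Sum>j'<N. x ^ nat \<bar>int j - int j'\<bar>) \<le> 2 / (1 - x)"
proof -
  define A where "A = {j'. j' < N \<and> j' \<le> j}"
  define B where "B = {j'. j' < N \<and> j < j'}"
  have U: "{..<N} = A \<union> B" "A \<inter> B = {}" "finite A" "finite B"
    by (auto simp: A_def B_def)
  have iA: "inj_on (\<lambda>j'. nat \<bar>int j - int j'\<bar>) A"
    by (auto simp: inj_on_def A_def)
  have iB: "inj_on (\<lambda>j'. nat \<bar>int j - int j'\<bar>) B"
    by (auto simp: inj_on_def B_def)
  have "(\<Sum>j'<N. x ^ nat \<bar>int j - int j'\<bar>) = (\<Sum>j'\<in>A. x ^ nat \<bar>int j - int j'\<bar>) + (\<Sum>j'\<in>B. x ^ nat \<bar>int j - int j'\<bar>)"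
    unfolding U(1) by (rule sum.union_disjoint[OF U(3,4,2)])
  also have "\<dots> \<le> 1/(1-x) + 1/(1-x)"
    by (intro add_mono geom_inj[OF assms U(3) iA] geom_inj[OF assms U(4) iB])
  finally show ?thesis by simp
qed

lemma sum2_bound:
  fixes \<alpha> :: real
  assumes "\<alpha> > 0"
  shows "(\<Sum>j<N. \<Sum>j'<N. exp (-\<alpha> * (real j - real j')^2)) \<le> real N * (2 / (1 - exp (-\<alpha>)))"
proof -
  have x: "0 \<le> exp (-\<alpha>)" "exp (-\<alpha>) < 1" using assms by auto
  have pt: "exp (-\<alpha> * (real j - real j')^2) \<le> exp (-\<alpha>) ^ nat \<bar>int j - int j'\<bar>" for j j' :: nat
  proof -
    define m where "m = nat \<bar>int j - int j'\<bar>"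
    have "\<bar>real j - real j'\<bar> = real m" unfolding m_def by linarith
    hence "(real j - real j')^2 = real m ^ 2" by (metis power2_abs)
    moreover have "real m \<le> real m ^ 2"
      by (cases m) (auto simp: power2_eq_square)
    ultimately have "-\<alpha> * (real j - real j')^2 \<le> -\<alpha> * real m"
      using assms by (simp add: mult_left_mono)
    hence "exp (-\<alpha> * (real j - real j')^2) \<le> exp (real m * (-\<alpha>))" by (simp add: mult.commute)
    also have "\<dots> = exp (-\<alpha>) ^ m" by (rule exp_of_nat_mult)
    finally show ?thesis unfolding m_def .
  qed
  have "(\<Sum>j<N. \<Sum>j'<N. exp (-\<alpha> * (real j - real j')^2)) \<le> (\<Sum>j<N. \<Sum>j'<N. exp (-\<alpha>) ^ nat \<bar>int j - int j'\<bar>)"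
    by (intro sum_mono pt)
  also have "\<dots> \<le> (\<Sum>j<N. 2 / (1 - exp (-\<alpha>)))"
    by (intro sum_mono geom_row x)
  finally show ?thesis by simp
qed

lemma one_minus_exp_bound:
  fixes \<alpha> :: real
  assumes "\<alpha> > 0" shows "1 / (1 - exp (-\<alpha>)) \<le> 1 + 1/\<alpha>"
proof -
  have "1 + \<alpha> \<le> exp \<alpha>" using exp_ge_add_one_self[of \<alpha>] by simp
  hence "exp (-\<alpha>) \<le> 1 / (1 + \<alpha>)" using assms by (simp add: exp_minus field_simps)
  hence h1: "\<alpha> / (1 + \<alpha>) \<le> 1 - exp (-\<alpha>)" using assms by (simp add: field_simps)
  have h2: "0 < \<alpha> / (1 + \<alpha>)" using assms by simp
  have "1 / (1 - exp (-\<alpha>)) \<le> 1 / (\<alpha> / (1 + \<alpha>))"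
    by (rule frac_le) (use h1 h2 in auto)
  also have "\<dots> = 1 + 1/\<alpha>" using assms by (simp add: field_simps)
  finally show ?thesis .
qed

lemma small_ball_1d:
  assumes p: "0 < p" "p < 1" and r: "0 < \<rho>" "\<rho> \<le> 1" and L: "finite L"
    and c2: "(\<Sum>l\<in>L. (c l)^2) = 1" and cb: "\<And>l. l \<in> L \<Longrightarrow> \<bar>c l\<bar> \<le> 2*\<rho>"
  shows "measure_pmf.prob (Pi_pmf L False (\<lambda>_. bernoulli_pmf p)) {r. \<bar>S1 L c r - b\<bar> \<le> \<rho>}
     \<le> (4 + 128/(p*(1-p))) * \<rho>"
proof -
  let ?M = "Pi_pmf L False (\<lambda>_. bernoulli_pmf p)"
  define N where "N = nat \<lceil>1/\<rho>\<rceil>"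
  have N1: "1/\<rho> \<le> real N" "real N \<le> 1/\<rho> + 1"
  proof -
    have "0 < 1/\<rho>" using r by simp
    hence "0 \<le> \<lceil>1/\<rho>\<rceil>" by linarith
    hence "real N = real_of_int \<lceil>1/\<rho>\<rceil>" unfolding N_def by simp
    thus "1/\<rho> \<le> real N" "real N \<le> 1/\<rho> + 1" using ceiling_correct[of "1/\<rho>"] by linarith+
  qed
  have Npos: "real N > 0" using N1(1) r by (smt (verit) divide_pos_pos)
  define \<beta> where "\<beta> = p*(1-p)/4"
  have bpos: "\<beta> > 0" using p by (simp add: \<beta>_def)
  define K where "K r = (\<Sum>j<N. \<Sum>j'<N. cos ((real j - real j') * ((S1 L c r - b)/(2*N*\<rho>))))" for r
  have ind: "indicator {r. \<bar>S1 L c r - b\<bar> \<le> \<rho>} r \<le> 2/(real N)^2 * K r" for r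
  proof (cases "\<bar>S1 L c r - b\<bar> \<le> \<rho>")
    case True
    have "\<bar>(S1 L c r - b)/(2*N*\<rho>)\<bar> * real N = \<bar>S1 L c r - b\<bar> / (2*\<rho>)"
      using Npos r by (simp add: abs_divide abs_mult field_simps)
    also have "\<dots> \<le> 1/2" using True r by (simp add: field_simps)
    finally have "real N ^ 2 / 2 \<le> K r" unfolding K_def by (rule kernel_large)
    hence "1 \<le> 2/(real N)^2 * K r" using Npos by (simp add: field_simps)
    thus ?thesis using True by simp
  next
    case False
    have "0 \<le> K r" unfolding K_def by (rule kernel_nonneg)
    thus ?thesis using False Npos by simp
  qed
  have int: "integrable (measure_pmf ?M) f" for f :: "_ \<Rightarrow> real"
    by (rule integrable_measure_pmf_finite[OF finite_set_Pi_bool[OF L]])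
  define t where "t j j' = (real j - real j') / (2*N*\<rho>)" for j j' :: nat
  have Kt: "K r = (\<Sum>j<N. \<Sum>j'<N. cos (t j j' * (S1 L c r - b)))" for r
    unfolding K_def t_def by (intro sum.cong refl) (simp add: field_simps)
  have tc: "\<bar>t j j' * c l\<bar> \<le> 1" if "j < N" "j' < N" "l \<in> L" for j j' l
  proof -
    have "\<bar>real j - real j'\<bar> \<le> real N" using that by linarith
    have "\<bar>t j j'\<bar> = \<bar>real j - real j'\<bar> / (2*N*\<rho>)"
      unfolding t_def using Npos r by (simp add: abs_divide)
    also have "\<dots> \<le> real N / (2*N*\<rho>)"
      by (rule divide_right_mono) (use \<open>\<bar>real j - real j'\<bar> \<le> real N\<close> Npos r in auto)
    also have "\<dots> = 1/(2*\<rho>)" using Npos by simp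
    finally have "\<bar>t j j'\<bar> * \<bar>c l\<bar> \<le> 1/(2*\<rho>) * (2*\<rho>)"
      using cb[OF that(3)] by (intro mult_mono) auto
    thus ?thesis using r by (simp add: abs_mult)
  qed
  define \<alpha> where "\<alpha> = \<beta> / (4 * (real N)^2 * \<rho>^2)"
  have apos: "\<alpha> > 0" using bpos Npos r by (simp add: \<alpha>_def)
  have texp: "-(p*(1-p)/4*(t j j')^2) = -\<alpha> * (real j - real j')^2" for j j'
    unfolding \<alpha>_def \<beta>_def t_def using Npos r by (simp add: power_divide field_simps power2_eq_square)
  have "measure_pmf.prob ?M {r. \<bar>S1 L c r - b\<bar> \<le> \<rho>} = measure_pmf.expectation ?M (indicator {r. \<bar>S1 L c r - b\<bar> \<le> \<rho>})"
    by (rule E_indicator[symmetric])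
  also have "\<dots> \<le> measure_pmf.expectation ?M (\<lambda>r. 2/(real N)^2 * K r)"
    by (intro integral_mono int ind)
  also have "\<dots> = 2/(real N)^2 * (\<Sum>j<N. \<Sum>j'<N. measure_pmf.expectation ?M (\<lambda>r. cos (t j j' * (S1 L c r - b))))"
    unfolding Kt by (simp add: Bochner_Integration.integral_sum int integral_mult_right_zero)
  also have "\<dots> \<le> 2/(real N)^2 * (\<Sum>j<N. \<Sum>j'<N. exp (-(p*(1-p)/4*(t j j')^2)))"
    using Npos p
    by (intro mult_left_mono sum_mono Ecos_bound[OF L] c2 tc) auto
  also have "\<dots> = 2/(real N)^2 * (\<Sum>j<N. \<Sum>j'<N. exp (-\<alpha> * (real j - real j')^2))"
    by (simp only: texp)
  also have "\<dots> \<le> 2/(real N)^2 * (real N * (2 / (1 - exp (-\<alpha>))))"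
    using Npos by (intro mult_left_mono sum2_bound apos) auto
  also have "\<dots> = 4 / real N * (1 / (1 - exp (-\<alpha>)))"
    using Npos by (simp add: power2_eq_square field_simps)
  also have "\<dots> \<le> 4 / real N * (1 + 1/\<alpha>)"
    using Npos by (intro mult_left_mono one_minus_exp_bound apos) auto
  also have "\<dots> = 4 / real N + 16 * real N * \<rho>^2 / \<beta>"
    unfolding \<alpha>_def using Npos r bpos by (simp add: field_simps power2_eq_square)
  also have "\<dots> \<le> 4 * \<rho> + 32 * \<rho> / \<beta>"
  proof -
    have "4 / real N \<le> 4 * \<rho>"
      using N1(1) r Npos by (simp add: field_simps)
    moreover have "16 * real N * \<rho>^2 / \<beta> \<le> 32 * \<rho> / \<beta>"
    proof -
      have "real N * \<rho> \<le> (1/\<rho> + 1) * \<rho>" using N1(2) r by (intro mult_right_mono) auto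
      also have "\<dots> \<le> 2" using r by (simp add: field_simps)
      finally have "16 * real N * \<rho>^2 \<le> 32 * \<rho>"
        using r by (simp add: power2_eq_square) (smt (verit) mult_left_mono mult.assoc mult.commute)
      thus ?thesis using bpos by (simp add: divide_right_mono)
    qed
    ultimately show ?thesis by linarith
  qed
  also have "\<dots> = (4 + 128/(p*(1-p))) * \<rho>"
    unfolding \<beta>_def by (simp add: field_simps)
  finally show ?thesis .
qed



definition ip :: "nat \<Rightarrow> (nat \<Rightarrow> real) \<Rightarrow> (nat \<Rightarrow> real) \<Rightarrow> real" where
  "ip K x y = (\<Sum>j<K. x j * y j)"

definition SV :: "'i set \<Rightarrow> ('i \<Rightarrow> nat \<Rightarrow> real) \<Rightarrow> ('i \<Rightarrow> bool) \<Rightarrow> nat \<Rightarrow> real" where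
  "SV L u r = (\<lambda>j. \<Sum>l\<in>L. if r l then u l j else 0)"

definition fixv :: "nat \<Rightarrow> 'i set \<Rightarrow> ('i \<Rightarrow> nat \<Rightarrow> real) \<Rightarrow> (nat \<Rightarrow> real) \<Rightarrow> bool" where
  "fixv K L u x \<longleftrightarrow> (\<forall>j<K. (\<Sum>l\<in>L. ip K x (u l) * u l j) = x j)"

definition frame :: "nat \<Rightarrow> 'i set \<Rightarrow> ('i \<Rightarrow> nat \<Rightarrow> real) \<Rightarrow> bool" where
  "frame K L u \<longleftrightarrow> (\<forall>m\<in>L. fixv K L u (u m))"

lemma ip_sym: "ip K x y = ip K y x"
  unfolding ip_def by (simp add: mult.commute)

lemma ip_nonneg: "0 \<le> ip K x x"
  unfolding ip_def by (intro sum_nonneg) simp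

lemma ip_cong: "(\<And>j. j < K \<Longrightarrow> x j = x' j) \<Longrightarrow> ip K x y = ip K x' y"
  unfolding ip_def by (intro sum.cong) auto

lemma ip_cong2: "(\<And>j. j < K \<Longrightarrow> y j = y' j) \<Longrightarrow> ip K x y = ip K x y'"
  unfolding ip_def by (intro sum.cong) auto

lemma ip_lin_sum: "ip K (\<lambda>j. \<Sum>l\<in>L. f l * v l j) y = (\<Sum>l\<in>L. f l * ip K (v l) y)"
  unfolding ip_def by (simp add: sum_distrib_left sum_distrib_right sum.swap[of _ L] mult.assoc)

lemma ip_diff_scale: "ip K (\<lambda>j. x j - c * y j) z = ip K x z - c * ip K y z"
  unfolding ip_def by (simp add: sum_subtractf sum_distrib_left left_diff_distrib mult.assoc)

lemma ip_add_scale: "ip K (\<lambda>j. x j + c * y j) z = ip K x z + c * ip K y z"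
  unfolding ip_def by (simp add: sum.distrib sum_distrib_left distrib_right mult.assoc)

lemma ip_diff: "ip K (\<lambda>j. x j - y j) z = ip K x z - ip K y z"
  unfolding ip_def by (simp add: sum_subtractf left_diff_distrib)

lemma ip_CS: "(ip K x y)^2 \<le> ip K x x * ip K y y"
  unfolding ip_def using Cauchy_Schwarz_ineq_sum[of x y "{..<K}"] by (simp add: power2_eq_square)

lemma ip_parallelogram:
  assumes "\<And>j. j < K \<Longrightarrow> u j = w j - z j"
  shows "ip K u u \<le> 2 * ip K w w + 2 * ip K z z"
proof -
  have "ip K u u = (\<Sum>j<K. (w j - z j) * (w j - z j))"
    unfolding ip_def by (intro sum.cong) (auto simp: assms)
  also have "\<dots> \<le> (\<Sum>j<K. 2 * (w j * w j) + 2 * (z j * z j))"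
  proof (rule sum_mono)
    fix j show "(w j - z j) * (w j - z j) \<le> 2 * (w j * w j) + 2 * (z j * z j)"
      using sum_squares_ge_zero[of "w j + z j" 0] by (simp add: algebra_simps power2_eq_square)
  qed
  also have "\<dots> = 2 * ip K w w + 2 * ip K z z"
    unfolding ip_def by (simp add: sum.distrib sum_distrib_left)
  finally show ?thesis .
qed

lemma ip_SV: "ip K (SV L u r) y = (\<Sum>l\<in>L. (if r l then 1 else 0) * ip K (u l) y)"
proof -
  have "SV L u r = (\<lambda>j. \<Sum>l\<in>L. (if r l then 1 else 0) * u l j)"
    unfolding SV_def by (intro ext sum.cong) auto
  thus ?thesis by (simp add: ip_lin_sum)
qed

lemma fixv_polar:
  assumes "finite L" "fixv K L u x"
  shows "(\<Sum>l\<in>L. ip K x (u l) * ip K y (u l)) = ip K y x"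
proof -
  have "ip K y x = ip K x y" by (rule ip_sym)
  also have "\<dots> = ip K (\<lambda>j. \<Sum>l\<in>L. ip K x (u l) * u l j) y"
    using assms(2) unfolding fixv_def by (intro ip_cong) auto
  also have "\<dots> = (\<Sum>l\<in>L. ip K x (u l) * ip K (u l) y)"
    by (rule ip_lin_sum)
  finally show ?thesis by (simp add: ip_sym)
qed

lemma fixv_diff_scale:
  assumes "fixv K L u x" "fixv K L u y"
  shows "fixv K L u (\<lambda>j. x j - c * y j)"
  unfolding fixv_def
proof (intro allI impI)
  fix j assume j: "j < K"
  have "(\<Sum>l\<in>L. ip K (\<lambda>j. x j - c * y j) (u l) * u l j)
      = (\<Sum>l\<in>L. ip K x (u l) * u l j) - c * (\<Sum>l\<in>L. ip K y (u l) * u l j)"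
    by (simp add: ip_diff_scale left_diff_distrib sum_subtractf sum_distrib_left mult.assoc)
  also have "\<dots> = x j - c * y j" using assms j unfolding fixv_def by simp
  finally show "(\<Sum>l\<in>L. ip K (\<lambda>j. x j - c * y j) (u l) * u l j) = x j - c * y j" .
qed

definition P :: "nat \<Rightarrow> (nat \<Rightarrow> real) \<Rightarrow> (nat \<Rightarrow> real) \<Rightarrow> nat \<Rightarrow> real" where
  "P K u0 x = (\<lambda>j. x j - (ip K x u0 / ip K u0 u0) * u0 j)"

lemma P_u0: assumes "ip K u0 u0 \<noteq> 0" shows "ip K (P K u0 x) u0 = 0"
  unfolding P_def ip_diff_scale using assms by simp

lemma P_PP: assumes "ip K u0 u0 \<noteq> 0"
  shows "ip K (P K u0 x) (P K u0 y) = ip K x y - ip K x u0 * ip K y u0 / ip K u0 u0"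
proof -
  have "ip K (P K u0 x) (P K u0 y) = ip K (P K u0 y) (P K u0 x)" by (rule ip_sym)
  also have "\<dots> = ip K y (P K u0 x) - (ip K y u0 / ip K u0 u0) * ip K u0 (P K u0 x)"
    unfolding P_def[of K u0 y] by (rule ip_diff_scale)
  also have "ip K u0 (P K u0 x) = 0" using P_u0[OF assms] by (simp add: ip_sym)
  also have "ip K y (P K u0 x) = ip K (P K u0 x) y" by (rule ip_sym)
  also have "\<dots> = ip K x y - (ip K x u0 / ip K u0 u0) * ip K u0 y"
    unfolding P_def by (rule ip_diff_scale)
  finally show ?thesis by (simp add: ip_sym)
qed

lemma P_le: assumes "ip K u0 u0 > 0" shows "ip K (P K u0 x) (P K u0 x) \<le> ip K x x"
proof -
  have "0 \<le> ip K x u0 * ip K x u0 / ip K u0 u0" using assms by simp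
  thus ?thesis using P_PP[of K u0 x x] assms by simp
qed

lemma P_sub: "P K u0 (\<lambda>j. x j - y j) j = P K u0 x j - P K u0 y j"
  unfolding P_def ip_diff by (simp add: diff_divide_distrib left_diff_distrib)

lemma P_add: assumes "ip K u0 u0 \<noteq> 0" shows "P K u0 (\<lambda>j. x j + c * u0 j) j = P K u0 x j"
  unfolding P_def ip_add_scale using assms by (simp add: add_divide_distrib distrib_right)

lemma P_SV: "P K u0 (SV L u f) j = SV L (\<lambda>l. P K u0 (u l)) f j"
proof -
  have "SV L (\<lambda>l. P K u0 (u l)) f j = (\<Sum>l\<in>L. (if f l then u l j else 0) - ((if f l then 1 else 0) * ip K (u l) u0 / ip K u0 u0) * u0 j)"
    unfolding SV_def P_def by (intro sum.cong) auto
  also have "\<dots> = SV L u f j - ((\<Sum>l\<in>L. (if f l then 1 else 0) * ip K (u l) u0) / ip K u0 u0) * u0 j"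
    unfolding SV_def by (simp add: sum_subtractf sum_distrib_right sum_divide_distrib)
  also have "\<dots> = P K u0 (SV L u f) j"
    unfolding P_def ip_SV ..
  finally show ?thesis ..
qed

lemma fixv_P:
  assumes "fixv K L u x" "fixv K L u u0"
  shows "fixv K L u (P K u0 x)"
  unfolding P_def by (rule fixv_diff_scale[OF assms])

lemma frame_step:
  assumes L: "finite L" and fr: "frame K L u" and l0: "l0 \<in> L" and s: "ip K (u l0) (u l0) > 0"
  shows "frame K (L - {l0}) (\<lambda>l. P K (u l0) (u l))"
    and "(\<Sum>l\<in>L - {l0}. ip K (P K (u l0) (u l)) (P K (u l0) (u l))) = (\<Sum>l\<in>L. ip K (u l) (u l)) - 1"
proof -
  let ?u0 = "u l0"
  let ?s = "ip K (u l0) (u l0)"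
  have s0: "?s \<noteq> 0" using s by simp
  have fx0: "fixv K L u ?u0" using fr l0 unfolding frame_def by blast
  show "frame K (L - {l0}) (\<lambda>l. P K ?u0 (u l))"
    unfolding frame_def fixv_def
  proof (intro ballI allI impI)
    fix m j assume m: "m \<in> L - {l0}" and j: "j < K"
    define x where "x = P K ?u0 (u m)"
    have fx: "fixv K L u x" unfolding x_def
      by (rule fixv_P[OF _ fx0]) (use fr m in \<open>auto simp: frame_def\<close>)
    have xu0: "ip K x ?u0 = 0" unfolding x_def by (rule P_u0[OF s0])
    have ipx: "ip K x (P K ?u0 (u l)) = ip K x (u l)" for l
    proof -
      have "ip K x (P K ?u0 (u l)) = ip K (P K ?u0 (u l)) x" by (rule ip_sym)
      also have "\<dots> = ip K (u l) x - (ip K (u l) ?u0 / ?s) * ip K ?u0 x"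
        unfolding P_def by (rule ip_diff_scale)
      also have "ip K ?u0 x = 0" using xu0 by (simp add: ip_sym)
      finally show ?thesis by (simp add: ip_sym)
    qed
    have "(\<Sum>l\<in>L - {l0}. ip K x (P K ?u0 (u l)) * P K ?u0 (u l) j)
        = (\<Sum>l\<in>L - {l0}. ip K x (u l) * u l j - (?u0 j / ?s) * (ip K x (u l) * ip K ?u0 (u l)))"
    proof (intro sum.cong refl)
      fix l
      have a: "P K ?u0 (u l) j = u l j - (ip K (u l) ?u0 / ?s) * ?u0 j" by (simp add: P_def)
      have b: "ip K ?u0 (u l) = ip K (u l) ?u0" by (rule ip_sym)
      have c: "\<And>A B C D S::real. A * (C - (B/S) * D) = A * C - (D/S) * (A * B)"
        by (simp add: algebra_simps divide_inverse)
      show "ip K x (P K ?u0 (u l)) * P K ?u0 (u l) j = ip K x (u l) * u l j - (?u0 j / ?s) * (ip K x (u l) * ip K ?u0 (u l))"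
        unfolding ipx a b by (rule c)
    qed
    also have "\<dots> = (\<Sum>l\<in>L - {l0}. ip K x (u l) * u l j) - (?u0 j / ?s) * (\<Sum>l\<in>L - {l0}. ip K x (u l) * ip K ?u0 (u l))"
      by (simp add: sum_subtractf sum_distrib_left)
    also have "(\<Sum>l\<in>L - {l0}. ip K x (u l) * u l j) = (\<Sum>l\<in>L. ip K x (u l) * u l j)"
      using L l0 xu0 by (simp add: sum_diff1)
    also have "\<dots> = x j" using fx j unfolding fixv_def by blast
    also have "(\<Sum>l\<in>L - {l0}. ip K x (u l) * ip K ?u0 (u l)) = (\<Sum>l\<in>L. ip K x (u l) * ip K ?u0 (u l))"
      using L l0 xu0 by (simp add: sum_diff1)
    also have "\<dots> = ip K ?u0 x" by (rule fixv_polar[OF L fx])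
    also have "\<dots> = 0" using xu0 by (simp add: ip_sym)
    finally show "(\<Sum>l\<in>L - {l0}. ip K (P K ?u0 (u m)) (P K ?u0 (u l)) * P K ?u0 (u l) j) = P K ?u0 (u m) j"
      unfolding x_def by simp
  qed
  have z: "ip K (P K ?u0 ?u0) (P K ?u0 ?u0) = 0"
    using P_PP[OF s0, of ?u0 ?u0] s0 by (simp add: power2_eq_square)
  have "(\<Sum>l\<in>L - {l0}. ip K (P K ?u0 (u l)) (P K ?u0 (u l))) = (\<Sum>l\<in>L. ip K (P K ?u0 (u l)) (P K ?u0 (u l)))"
    by (simp only: sum.remove[OF L l0, where g="\<lambda>l. ip K (P K ?u0 (u l)) (P K ?u0 (u l))"] z add_0_left)
  also have "\<dots> = (\<Sum>l\<in>L. ip K (u l) (u l) - ip K (u l) ?u0 * ip K (u l) ?u0 / ?s)"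
    by (intro sum.cong refl) (simp only: P_PP[OF s0])
  also have "\<dots> = (\<Sum>l\<in>L. ip K (u l) (u l)) - (\<Sum>l\<in>L. ip K (u l) ?u0 * ip K (u l) ?u0) / ?s"
    by (simp add: sum_subtractf sum_divide_distrib)
  also have "(\<Sum>l\<in>L. ip K (u l) ?u0 * ip K (u l) ?u0) = (\<Sum>l\<in>L. ip K ?u0 (u l) * ip K ?u0 (u l))"
  proof (intro sum.cong refl)
    fix l show "ip K (u l) ?u0 * ip K (u l) ?u0 = ip K ?u0 (u l) * ip K ?u0 (u l)"
      using ip_sym[of K "u l" ?u0] by simp
  qed
  also have "\<dots> = ?s"
    by (rule fixv_polar[OF L fx0])
  finally show "(\<Sum>l\<in>L - {l0}. ip K (P K ?u0 (u l)) (P K ?u0 (u l))) = (\<Sum>l\<in>L. ip K (u l) (u l)) - 1"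
    using s0 by simp
qed



lemma SV_upd:
  assumes "finite L" "l \<notin> L"
  shows "SV (insert l L) u (f(l:=y)) j = (if y then 1 else 0) * u l j + SV L u f j"
proof -
  have "(\<Sum>m\<in>L. if (f(l:=y)) m then u m j else 0) = (\<Sum>m\<in>L. if f m then u m j else 0)"
    by (rule sum.cong) (use assms in auto)
  thus ?thesis using assms by (simp add: SV_def)
qed

lemma ip_div: "ip K (\<lambda>j. x j / t) y = ip K x y / t"
  unfolding ip_def by (simp add: sum_divide_distrib)

lemma ip_SV2: "ip K y (SV L u r) = (\<Sum>l\<in>L. if r l then ip K y (u l) else 0)"
proof -
  have "ip K y (SV L u r) = ip K (SV L u r) y" by (rule ip_sym)
  also have "\<dots> = (\<Sum>l\<in>L. (if r l then 1 else 0) * ip K (u l) y)" by (rule ip_SV)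
  also have "\<dots> = (\<Sum>l\<in>L. if r l then ip K y (u l) else 0)"
    by (intro sum.cong refl) (simp add: ip_sym[of K "u _" y])
  finally show ?thesis .
qed

lemma ip_diff2: "ip K y (\<lambda>j. x j - z j) = ip K y x - ip K y z"
  unfolding ip_def by (simp add: sum_subtractf right_diff_distrib)

lemma core:
  fixes p \<rho> q :: real and D K :: nat and d :: nat
  assumes p: "0 < p" "p \<le> 1/2" and r: "0 < \<rho>" "\<rho> \<le> 1" and q: "1 - p \<le> q" "q \<le> 1"
    and small: "(4 + 128/(p*(1-p))) * \<rho> \<le> q ^ D"
  shows "finite L \<Longrightarrow> frame K L u \<Longrightarrow> (\<Sum>l\<in>L. ip K (u l) (u l)) = real d \<Longrightarrow> d \<le> D \<Longrightarrow>
    measure_pmf.prob (Pi_pmf L False (\<lambda>_. bernoulli_pmf p))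
      {r. ip K (\<lambda>j. SV L u r j - a j) (\<lambda>j. SV L u r j - a j) \<le> \<rho>^2} \<le> q ^ d"
proof (induction d arbitrary: L u a)
  case 0
  then show ?case by (simp add: measure_pmf.prob_le_1)
next
  case (Suc d)
  note L = Suc.prems(1) and fr = Suc.prems(2) and tr = Suc.prems(3) and dD = Suc.prems(4)
  let ?M = "\<lambda>L. Pi_pmf L False (\<lambda>_. bernoulli_pmf p)"
  define Ev where "Ev = {r. ip K (\<lambda>j. SV L u r j - a j) (\<lambda>j. SV L u r j - a j) \<le> \<rho>^2}"
  have q0: "0 \<le> q" using q p by linarith
  show ?case
  proof (cases "\<exists>l0\<in>L. ip K (u l0) (u l0) > 4*\<rho>^2")
    case True
    then obtain l0 where l0: "l0 \<in> L" and big: "ip K (u l0) (u l0) > 4*\<rho>^2" by blast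
    define u0 where "u0 = u l0"
    define s where "s = ip K u0 u0"
    have spos: "s > 0" using big r unfolding s_def u0_def by (smt (verit) zero_less_power)
    hence s0: "s \<noteq> 0" by simp
    define L' where "L' = L - {l0}"
    define u' where "u' = (\<lambda>l. P K u0 (u l))"
    define a' where "a' = P K u0 a"
    have L': "finite L'" "l0 \<notin> L'" "L = insert l0 L'" using L l0 by (auto simp: L'_def)
    have fr': "frame K L' u'" using frame_step(1)[OF L fr l0] spos unfolding u'_def L'_def u0_def s_def by blast
    have tr': "(\<Sum>l\<in>L'. ip K (u' l) (u' l)) = real d"
      using frame_step(2)[OF L fr l0] spos tr unfolding u'_def L'_def u0_def s_def by simp
    define B where "B = {f. ip K (\<lambda>j. SV L' u' f j - a' j) (\<lambda>j. SV L' u' f j - a' j) \<le> \<rho>^2}"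
    have IH: "measure_pmf.prob (?M L') B \<le> q ^ d"
      unfolding B_def by (rule Suc.IH[OF L'(1) fr' tr']) (use dD in simp)
    define A where "A = (\<lambda>y. {f. f(l0:=y) \<in> Ev})"
    have zeq: "(\<lambda>j. SV L u (f(l0:=y)) j - a j) = (\<lambda>j. (SV L' u f j - a j) + (if y then 1 else 0) * u0 j)" for f y
      unfolding L'(3) by (rule ext) (simp add: SV_upd[OF L'(1,2)] u0_def)
    have AB: "A y \<subseteq> B" for y
    proof
      fix f assume "f \<in> A y"
      hence ev: "ip K (\<lambda>j. SV L u (f(l0:=y)) j - a j) (\<lambda>j. SV L u (f(l0:=y)) j - a j) \<le> \<rho>^2"
        by (simp add: A_def Ev_def)
      define z where "z = (\<lambda>j. (SV L' u f j - a j) + (if y then 1 else 0) * u0 j)"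
      have zz: "ip K z z \<le> \<rho>^2" using ev unfolding zeq z_def .
      have Pz: "P K u0 z j = SV L' u' f j - a' j" for j
      proof -
        have "P K u0 z j = P K u0 (\<lambda>j. SV L' u f j - a j) j"
          unfolding z_def by (rule P_add[OF s0[unfolded s_def]])
        also have "\<dots> = P K u0 (SV L' u f) j - P K u0 a j" by (rule P_sub)
        also have "\<dots> = SV L' u' f j - a' j" unfolding a'_def u'_def P_SV ..
        finally show ?thesis .
      qed
      have "ip K (\<lambda>j. SV L' u' f j - a' j) (\<lambda>j. SV L' u' f j - a' j) = ip K (P K u0 z) (P K u0 z)"
        using Pz by (simp add: ip_def)
      also have "\<dots> \<le> ip K z z" by (rule P_le) (use spos s_def in simp)
      finally show "f \<in> B" using zz by (simp add: B_def)
    qed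
    have Adisj: "A False \<inter> A True = {}"
    proof (rule ccontr)
      assume "A False \<inter> A True \<noteq> {}"
      then obtain f where f: "f \<in> A False" "f \<in> A True" by blast
      define zF where "zF = (\<lambda>j. SV L u (f(l0:=False)) j - a j)"
      define zT where "zT = (\<lambda>j. SV L u (f(l0:=True)) j - a j)"
      have "ip K zF zF \<le> \<rho>^2" "ip K zT zT \<le> \<rho>^2"
        using f by (simp_all add: A_def Ev_def zF_def zT_def)
      moreover have "ip K u0 u0 \<le> 2 * ip K zT zT + 2 * ip K zF zF"
        by (rule ip_parallelogram) (simp add: zF_def zT_def zeq)
      ultimately have "s \<le> 4 * \<rho>^2" unfolding s_def by linarith
      thus False using big unfolding s_def u0_def by linarith
    qed
    have "measure_pmf.prob (?M L) Ev = (1-p) * measure_pmf.prob (?M L') (A False) + p * measure_pmf.prob (?M L') (A True)"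
      unfolding L'(3) A_def by (rule prob_insert[OF L'(1,2)]) (use p in auto)
    also have "\<dots> \<le> (1-p) * measure_pmf.prob (?M L') (A False) + (1-p) * measure_pmf.prob (?M L') (A True)"
      using p by (intro add_left_mono mult_right_mono) auto
    also have "\<dots> = (1-p) * measure_pmf.prob (?M L') (A False \<union> A True)"
      using Adisj by (simp add: measure_pmf.finite_measure_Union distrib_left)
    also have "\<dots> \<le> (1-p) * measure_pmf.prob (?M L') B"
      using AB p by (intro mult_left_mono measure_pmf.finite_measure_mono) auto
    also have "\<dots> \<le> q * q ^ d"
      using IH p q q0 by (intro mult_mono) auto
    finally show ?thesis unfolding Ev_def by simp
  next
    case False
    hence small_u: "ip K (u l) (u l) \<le> 4*\<rho>^2" if "l \<in> L" for l using that by auto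
    obtain l0 where l0: "l0 \<in> L" and pos: "ip K (u l0) (u l0) > 0"
    proof (rule ccontr)
      assume "\<not> thesis"
      hence "\<forall>l\<in>L. ip K (u l) (u l) \<le> 0" using that by (meson not_less)
      hence "\<forall>l\<in>L. ip K (u l) (u l) = 0" using ip_nonneg by (meson antisym)
      hence "(\<Sum>l\<in>L. ip K (u l) (u l)) = 0" by simp
      thus False using tr by simp
    qed
    define u0 where "u0 = u l0"
    define s where "s = ip K u0 u0"
    have spos: "s > 0" using pos unfolding s_def u0_def .
    define w where "w = (\<lambda>j. u0 j / sqrt s)"
    define c where "c = (\<lambda>l. ip K w (u l))"
    define b where "b = ip K w a"
    have fx0: "fixv K L u u0" using fr l0 unfolding frame_def u0_def by blast
    have cw: "c l = ip K u0 (u l) / sqrt s" for l unfolding c_def w_def by (rule ip_div)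
    have ww: "ip K w w = 1"
    proof -
      have "ip K w w = ip K w u0 / sqrt s" unfolding w_def[of ] by (subst ip_sym) (simp add: ip_div w_def)
      also have "ip K w u0 = s / sqrt s" unfolding w_def s_def by (rule ip_div)
      finally show ?thesis using spos by simp
    qed
    have c2: "(\<Sum>l\<in>L. (c l)^2) = 1"
    proof -
      have "(\<Sum>l\<in>L. (c l)^2) = (\<Sum>l\<in>L. ip K u0 (u l) * ip K u0 (u l)) / s"
        unfolding cw using spos by (simp add: power_divide power2_eq_square sum_divide_distrib)
      also have "(\<Sum>l\<in>L. ip K u0 (u l) * ip K u0 (u l)) = s"
        unfolding s_def by (rule fixv_polar[OF L fx0])
      finally show ?thesis using spos by simp
    qed
    have cb: "\<bar>c l\<bar> \<le> 2*\<rho>" if "l \<in> L" for l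
    proof -
      have "(c l)^2 = (ip K u0 (u l))^2 / s" unfolding cw using spos by (simp add: power_divide)
      also have "\<dots> \<le> s * ip K (u l) (u l) / s"
        using ip_CS[of K u0 "u l"] spos unfolding s_def by (intro divide_right_mono) auto
      also have "\<dots> = ip K (u l) (u l)" using spos by simp
      also have "\<dots> \<le> (2*\<rho>)^2" using small_u[OF that] by (simp add: power_mult_distrib)
      finally have "\<bar>c l\<bar>^2 \<le> (2*\<rho>)^2" by (simp only: power2_abs)
      thus ?thesis by (rule power2_le_imp_le) (use r in auto)
    qed
    have sub: "Ev \<subseteq> {r. \<bar>S1 L c r - b\<bar> \<le> \<rho>}"
    proof
      fix r assume "r \<in> Ev"
      define z where "z = (\<lambda>j. SV L u r j - a j)"
      have zz: "ip K z z \<le> \<rho>^2" using \<open>r \<in> Ev\<close> unfolding Ev_def z_def by simp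
      have "S1 L c r - b = ip K w z"
        unfolding z_def ip_diff2 ip_SV2 S1_def c_def b_def ..
      moreover have "(ip K w z)^2 \<le> \<rho>^2" using ip_CS[of K w z] ww zz by simp
      ultimately have "\<bar>S1 L c r - b\<bar>^2 \<le> \<rho>^2" by simp
      hence "\<bar>S1 L c r - b\<bar> \<le> \<rho>" by (rule power2_le_imp_le) (use r in auto)
      thus "r \<in> {r. \<bar>S1 L c r - b\<bar> \<le> \<rho>}" by simp
    qed
    have "measure_pmf.prob (?M L) Ev \<le> measure_pmf.prob (?M L) {r. \<bar>S1 L c r - b\<bar> \<le> \<rho>}"
      by (rule measure_pmf.finite_measure_mono[OF sub]) simp
    also have "\<dots> \<le> (4 + 128/(p*(1-p))) * \<rho>"
      by (rule small_ball_1d[OF p(1) _ r L c2 cb]) (use p in auto)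
    also have "\<dots> \<le> q ^ D" by (rule small)
    also have "\<dots> \<le> q ^ Suc d" by (rule power_decreasing[OF dD q0 q(2)])
    finally show ?thesis unfolding Ev_def .
  qed
qed



lemma rows_indep:
  fixes G :: "('b \<Rightarrow> bool) \<Rightarrow> real"
  assumes B: "finite B" and G: "\<And>r. G (\<lambda>l. if l \<in> B then r l else False) = G r"
  shows "measure_pmf.expectation (Pi_pmf ({..<m} \<times> B) False (\<lambda>_. bernoulli_pmf p)) (\<lambda>M. \<Prod>i<m. G (\<lambda>l. M (i,l)))
       = (measure_pmf.expectation (Pi_pmf B False (\<lambda>_. bernoulli_pmf p)) G) ^ m"
proof (induction m)
  case 0
  then show ?case by simp
next
  case (Suc m)
  let ?bp = "(\<lambda>_::nat \<times> 'b. bernoulli_pmf p)"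
  have U: "{..<Suc m} \<times> B = ({m} \<times> B) \<union> ({..<m} \<times> B)" by auto
  have fin: "finite ({m} \<times> B)" "finite ({..<m} \<times> B)" "({m} \<times> B) \<inter> ({..<m} \<times> B) = {}" using B by auto
  have row_m: "G (\<lambda>l. (\<lambda>x. if x \<in> {m} \<times> B then f x else g x) (m, l)) = G (\<lambda>l. f (m, l))" for f g :: "nat \<times> 'b \<Rightarrow> bool"
  proof -
    have "G (\<lambda>l. (\<lambda>x. if x \<in> {m} \<times> B then f x else g x) (m, l)) = G (\<lambda>l. if l \<in> B then (\<lambda>l. (\<lambda>x. if x \<in> {m} \<times> B then f x else g x) (m, l)) l else False)"
      by (rule G[symmetric])
    also have "(\<lambda>l. if l \<in> B then (\<lambda>l. (\<lambda>x. if x \<in> {m} \<times> B then f x else g x) (m, l)) l else False) = (\<lambda>l. if l \<in> B then f (m, l) else False)"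
      by auto
    also have "G \<dots> = G (\<lambda>l. f (m, l))" by (rule G)
    finally show ?thesis .
  qed
  have row_i: "(\<Prod>i<m. G (\<lambda>l. (\<lambda>x. if x \<in> {m} \<times> B then f x else g x) (i, l))) = (\<Prod>i<m. G (\<lambda>l. g (i, l)))" for f g :: "nat \<times> 'b \<Rightarrow> bool"
    by (intro prod.cong refl) auto
  have E1: "measure_pmf.expectation (Pi_pmf ({m} \<times> B) False ?bp) (\<lambda>f. G (\<lambda>l. f (m, l)))
      = measure_pmf.expectation (Pi_pmf B False (\<lambda>_. bernoulli_pmf p)) G"
  proof -
    have "Pi_pmf B False (\<lambda>_. bernoulli_pmf p) = map_pmf (\<lambda>h. h \<circ> (\<lambda>l. (m, l))) (Pi_pmf ({m} \<times> B) False ?bp)"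
      by (rule Pi_pmf_bij_betw[OF B]) (auto simp: bij_betw_def inj_on_def)
    thus ?thesis by (simp add: o_def)
  qed
  have "measure_pmf.expectation (Pi_pmf ({..<Suc m} \<times> B) False ?bp) (\<lambda>M. \<Prod>i<Suc m. G (\<lambda>l. M (i,l)))
    = measure_pmf.expectation (pair_pmf (Pi_pmf ({m} \<times> B) False ?bp) (Pi_pmf ({..<m} \<times> B) False ?bp))
        (\<lambda>(f,g). \<Prod>i<Suc m. G (\<lambda>l. (\<lambda>x. if x \<in> {m} \<times> B then f x else g x) (i,l)))"
    unfolding U Pi_pmf_union[OF fin] integral_map_pmf by (simp add: case_prod_unfold)
  also have "\<dots> = measure_pmf.expectation (Pi_pmf ({m} \<times> B) False ?bp) (\<lambda>f.
        measure_pmf.expectation (Pi_pmf ({..<m} \<times> B) False ?bp) (\<lambda>g.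
          G (\<lambda>l. f (m, l)) * (\<Prod>i<m. G (\<lambda>l. g (i, l)))))"
    by (subst integral_pair_pmf_fin[OF finite_set_Pi_bool[OF fin(1)] finite_set_Pi_bool[OF fin(2)]])
       (simp only: case_prod_conv prod.lessThan_Suc row_m row_i mult.commute)
  also have "\<dots> = measure_pmf.expectation (Pi_pmf ({m} \<times> B) False ?bp) (\<lambda>f. G (\<lambda>l. f (m, l)) *
        measure_pmf.expectation (Pi_pmf ({..<m} \<times> B) False ?bp) (\<lambda>g. \<Prod>i<m. G (\<lambda>l. g (i, l))))"
    by (simp only: integral_mult_right_zero)
  also have "\<dots> = measure_pmf.expectation (Pi_pmf B False (\<lambda>_. bernoulli_pmf p)) G *
        (measure_pmf.expectation (Pi_pmf B False (\<lambda>_. bernoulli_pmf p)) G) ^ m"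
    by (simp only: integral_mult_left_zero Suc.IH E1)
  finally show ?case by simp
qed



definition Xrow :: "nat \<Rightarrow> nat \<Rightarrow> (nat \<Rightarrow> nat \<Rightarrow> real) \<Rightarrow> (nat \<Rightarrow> bool) \<Rightarrow> real" where
  "Xrow n k V r = (\<Sum>j<k. (\<Sum>l<n. of_bool (r l) * V l j)^2)"

lemma Xrow_nonneg: "0 \<le> Xrow n k V r"
  unfolding Xrow_def by (intro sum_nonneg) simp

lemma Xrow_restrict: "Xrow n k V (\<lambda>l. if l \<in> {..<n} then r l else False) = Xrow n k V r"
  unfolding Xrow_def by (intro sum.cong refl arg_cong[where f="\<lambda>x. x^2"]) auto

lemma Xrow_ip: "Xrow n k V r = ip k (\<lambda>j. SV {..<n} V r j - 0) (\<lambda>j. SV {..<n} V r j - 0)"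
proof -
  have "(\<Sum>l<n. of_bool (r l) * V l j) = (\<Sum>l<n. if r l then V l j else 0)" for j
    by (intro sum.cong) auto
  thus ?thesis unfolding Xrow_def ip_def SV_def by (simp add: power2_eq_square)
qed

lemma hs_eq: "hs_norm_prod m n k M V = sqrt (\<Sum>i<m. Xrow n k V (\<lambda>l. M (i,l)))"
  unfolding hs_norm_prod_def Xrow_def entry_def ..

lemma frame_V:
  assumes "orthonormal_cols n k V"
  shows "frame k {..<n} V"
  unfolding frame_def fixv_def
proof (intro ballI allI impI)
  fix m j assume m: "m \<in> {..<n}" and j: "j < k"
  have "(\<Sum>l<n. ip k (V m) (V l) * V l j) = (\<Sum>l<n. \<Sum>j'<k. V m j' * (V l j' * V l j))"
    unfolding ip_def by (simp add: sum_distrib_right mult.assoc)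
  also have "\<dots> = (\<Sum>j'<k. V m j' * (\<Sum>l<n. V l j' * V l j))"
    by (subst sum.swap) (simp add: sum_distrib_left)
  also have "\<dots> = (\<Sum>j'<k. V m j' * (if j' = j then 1 else 0))"
    using assms j unfolding orthonormal_cols_def by (intro sum.cong refl) auto
  also have "\<dots> = V m j" using j by (simp add: if_distrib cong: if_cong)
  finally show "(\<Sum>l\<in>{..<n}. ip k (V m) (V l) * V l j) = V m j" by simp
qed

lemma trace_V:
  assumes "orthonormal_cols n k V"
  shows "(\<Sum>l\<in>{..<n}. ip k (V l) (V l)) = real k"
proof -
  have "(\<Sum>l\<in>{..<n}. ip k (V l) (V l)) = (\<Sum>j<k. \<Sum>l<n. V l j * V l j)"
    unfolding ip_def by (rule sum.swap)
  also have "\<dots> = (\<Sum>j<k. 1)"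
    using assms unfolding orthonormal_cols_def by (intro sum.cong refl) auto
  finally show ?thesis by simp
qed

lemma row_bound:
  fixes p \<rho> q :: real
  assumes p: "0 < p" "p \<le> 1/2" and r: "0 < \<rho>" "\<rho> \<le> 1" and q: "1 - p \<le> q" "q \<le> 1"
    and small: "(4 + 128/(p*(1-p))) * \<rho> \<le> q ^ k"
    and V: "orthonormal_cols n k V"
  shows "measure_pmf.prob (Pi_pmf {..<n} False (\<lambda>_. bernoulli_pmf p)) {r. Xrow n k V r \<le> \<rho>^2} \<le> q ^ k"
proof -
  have "measure_pmf.prob (Pi_pmf {..<n} False (\<lambda>_. bernoulli_pmf p))
      {r. ip k (\<lambda>j. SV {..<n} V r j - (\<lambda>_. 0) j) (\<lambda>j. SV {..<n} V r j - (\<lambda>_. 0) j) \<le> \<rho>^2} \<le> q ^ k"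
    by (rule core[OF p r q small, of "{..<n}" k V k]) (use frame_V[OF V] trace_V[OF V] in auto)
  thus ?thesis by (simp add: Xrow_ip)
qed

lemma exp_row_bound:
  fixes p \<rho> q lam :: real
  assumes p: "0 < p" "p \<le> 1/2" and r: "0 < \<rho>" "\<rho> \<le> 1" and q: "1 - p \<le> q" "q \<le> 1"
    and small: "(4 + 128/(p*(1-p))) * \<rho> \<le> q ^ k"
    and V: "orthonormal_cols n k V" and lam: "0 \<le> lam"
  shows "measure_pmf.expectation (Pi_pmf {..<n} False (\<lambda>_. bernoulli_pmf p)) (\<lambda>r. exp (- lam * Xrow n k V r))
     \<le> q ^ k + exp (- lam * \<rho>^2)"
proof -
  let ?M = "Pi_pmf {..<n} False (\<lambda>_. bernoulli_pmf p)"
  have int: "integrable (measure_pmf ?M) f" for f :: "_ \<Rightarrow> real"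
    by (rule integrable_measure_pmf_finite[OF finite_set_Pi_bool]) simp
  have pt: "exp (- lam * Xrow n k V r) \<le> indicator {r. Xrow n k V r \<le> \<rho>^2} r + exp (- lam * \<rho>^2)" for r
  proof (cases "Xrow n k V r \<le> \<rho>^2")
    case True
    have "exp (- lam * Xrow n k V r) \<le> 1" using lam Xrow_nonneg[of n k V r] by (simp add: mult_nonneg_nonneg)
    thus ?thesis using True by (simp add: add_increasing2)
  next
    case False
    hence "- lam * Xrow n k V r \<le> - lam * \<rho>^2" using lam by (intro mult_left_mono_neg) auto
    thus ?thesis using False by simp
  qed
  have "measure_pmf.expectation ?M (\<lambda>r. exp (- lam * Xrow n k V r))
      \<le> measure_pmf.expectation ?M (\<lambda>r. indicator {r. Xrow n k V r \<le> \<rho>^2} r + exp (- lam * \<rho>^2))"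
    by (intro integral_mono int pt)
  also have "\<dots> = measure_pmf.prob ?M {r. Xrow n k V r \<le> \<rho>^2} + exp (- lam * \<rho>^2)"
    by (simp add: Bochner_Integration.integral_add[OF int int])
  also have "\<dots> \<le> q ^ k + exp (- lam * \<rho>^2)"
    using row_bound[OF p r q small V] by simp
  finally show ?thesis .
qed

theorem lemma2p7:
  fixes p \<epsilon> :: real and k :: nat
  assumes "0 < p" and "p \<le> 1/2" and "k \<ge> 1" and "\<epsilon> > 0"
  shows "\<exists>c>0. \<exists>n0::nat. \<forall>n\<ge>n0. \<forall>V :: nat \<Rightarrow> nat \<Rightarrow> real.
           orthonormal_cols n k V \<longrightarrow>
           measure_pmf.prob (ber_matrix_pmf (n - k) n p)
              {M. hs_norm_prod (n - k) n k M V \<le> c * sqrt (real n)}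
           \<le> (1 - p + \<epsilon>) ^ (k * n)"
proof (cases "1 \<le> 1 - p + \<epsilon>")
  case True
  show ?thesis
  proof (intro exI[of _ 1] conjI exI[of _ 0] allI impI)
    fix n :: nat and V :: "nat \<Rightarrow> nat \<Rightarrow> real"
    have "measure_pmf.prob (ber_matrix_pmf (n - k) n p) {M. hs_norm_prod (n - k) n k M V \<le> 1 * sqrt (real n)} \<le> 1"
      by (rule measure_pmf.prob_le_1)
    also have "1 \<le> (1 - p + \<epsilon>) ^ (k * n)" using True by (rule one_le_power)
    finally show "measure_pmf.prob (ber_matrix_pmf (n - k) n p) {M. hs_norm_prod (n - k) n k M V \<le> 1 * sqrt (real n)}
        \<le> (1 - p + \<epsilon>) ^ (k * n)" .
  qed simp
next
  case False
  note p = assms(1,2)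
  have k0: "0 < k" using assms(3) by simp
  have ep: "\<epsilon> < p" using False by simp
  define q where "q = 1 - p + \<epsilon>/2"
  have q: "1 - p \<le> q" "q \<le> 1" "0 < q" using ep assms unfolding q_def by auto
  define Q where "Q = q ^ k"
  define Q' where "Q' = (1 - p + 3*\<epsilon>/4) ^ k"
  define R where "R = (1 - p + \<epsilon>) ^ k"
  have QQ': "Q < Q'" unfolding Q_def Q'_def q_def
    by (rule power_strict_mono) (use assms ep k0 in auto)
  have Q'R: "Q' < R" unfolding R_def Q'_def
    by (rule power_strict_mono) (use assms ep k0 in auto)
  have Qpos: "0 < Q" unfolding Q_def using q by simp
  have R1: "R \<le> 1" unfolding R_def
    by (rule power_le_one) (use assms ep False in auto)
  have Q'1: "Q' < 1" using Q'R R1 by simp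
  define Cst where "Cst = 4 + 128/(p*(1-p))"
  have Cpos: "Cst > 0" unfolding Cst_def using p by (simp add: add_pos_nonneg)
  define \<rho> where "\<rho> = min 1 (Q / Cst)"
  have rho: "0 < \<rho>" "\<rho> \<le> 1" "Cst * \<rho> \<le> Q"
    unfolding \<rho>_def using Qpos Cpos by (auto simp: min_def field_simps)
  define lam where "lam = - ln (Q' - Q) / \<rho>^2"
  have lam_pos: "lam > 0"
  proof -
    have "ln (Q' - Q) < 0" using QQ' Q'1 Qpos by simp
    moreover have "0 < \<rho>^2" using rho by simp
    ultimately have "ln (Q' - Q) / \<rho>^2 < 0" by (rule divide_neg_pos)
    thus ?thesis unfolding lam_def by simp
  qed
  have lam_exp: "exp (- lam * \<rho>^2) = Q' - Q" unfolding lam_def using QQ' rho by simp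
  define s where "s = sqrt (R / Q')"
  have Q'pos: "0 < Q'" using Qpos QQ' by simp
  have s1: "1 < s" unfolding s_def using Q'R Q'pos by simp
  define c where "c = sqrt (ln s / lam)"
  have cpos: "c > 0" unfolding c_def using s1 lam_pos by simp
  have lc: "lam * c^2 = ln s" unfolding c_def using s1 lam_pos by simp
  have s2: "s^2 * Q' = R" unfolding s_def using Q'R Q'pos by simp
  obtain N1 where N1: "1 / Q' ^ k < s ^ N1" using real_arch_pow[OF s1] by blast
  show ?thesis
  proof (intro exI[of _ c] conjI exI[of _ "max N1 k"] allI impI cpos)
    fix n :: nat and V :: "nat \<Rightarrow> nat \<Rightarrow> real"
    assume n: "max N1 k \<le> n" and V: "orthonormal_cols n k V"
    let ?MM = "Pi_pmf ({..<n - k} \<times> {..<n}) False (\<lambda>_. bernoulli_pmf p)"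
    let ?Mr = "Pi_pmf {..<n} False (\<lambda>_. bernoulli_pmf p)"
    define T where "T = (\<lambda>M. \<Sum>i<n - k. Xrow n k V (\<lambda>l. M (i,l)))"
    have T0: "0 \<le> T M" for M unfolding T_def by (intro sum_nonneg Xrow_nonneg)
    have ev: "{M. hs_norm_prod (n - k) n k M V \<le> c * sqrt (real n)} = {M. T M \<le> c^2 * real n}"
    proof -
      have "c * sqrt (real n) = sqrt (c^2 * real n)" using cpos by (simp add: real_sqrt_mult)
      thus ?thesis unfolding hs_eq T_def by (simp add: real_sqrt_le_iff)
    qed
    have int: "integrable (measure_pmf ?MM) f" for f :: "_ \<Rightarrow> real"
      by (rule integrable_measure_pmf_finite[OF finite_set_Pi_bool]) simp
    have pt: "indicator {M. T M \<le> c^2 * real n} M \<le> exp (lam * c^2 * real n) * (\<Prod>i<n - k. exp (- lam * Xrow n k V (\<lambda>l. M (i,l))))" for M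
    proof -
      have "(\<Prod>i<n - k. exp (- lam * Xrow n k V (\<lambda>l. M (i,l)))) = exp (- lam * T M)"
        unfolding T_def by (simp add: exp_sum sum_distrib_left)
      hence eq: "exp (lam * c^2 * real n) * (\<Prod>i<n - k. exp (- lam * Xrow n k V (\<lambda>l. M (i,l)))) = exp (lam * (c^2 * real n - T M))"
        by (simp add: exp_add[symmetric] algebra_simps)
      show ?thesis
      proof (cases "T M \<le> c^2 * real n")
        case True
        hence "0 \<le> lam * (c^2 * real n - T M)" using lam_pos by simp
        thus ?thesis unfolding eq using True by simp
      next
        case False thus ?thesis unfolding eq by simp
      qed
    qed
    have E1: "measure_pmf.expectation ?Mr (\<lambda>r. exp (- lam * Xrow n k V r)) \<le> Q'"
      using exp_row_bound[OF p rho(1,2) q(1,2) _ V, of lam] rho(3) lam_pos lam_exp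
      unfolding Cst_def Q_def by simp
    have E0: "0 \<le> measure_pmf.expectation ?Mr (\<lambda>r. exp (- lam * Xrow n k V r))"
      by (intro Bochner_Integration.integral_nonneg) simp
    have "measure_pmf.prob (ber_matrix_pmf (n - k) n p) {M. hs_norm_prod (n - k) n k M V \<le> c * sqrt (real n)}
        = measure_pmf.expectation ?MM (indicator {M. T M \<le> c^2 * real n})"
      unfolding ev ber_matrix_pmf_def by (rule E_indicator[symmetric])
    also have "\<dots> \<le> measure_pmf.expectation ?MM (\<lambda>M. exp (lam * c^2 * real n) * (\<Prod>i<n - k. exp (- lam * Xrow n k V (\<lambda>l. M (i,l)))))"
      by (intro integral_mono int pt)
    also have "\<dots> = exp (lam * c^2 * real n) * measure_pmf.expectation ?MM (\<lambda>M. \<Prod>i<n - k. exp (- lam * Xrow n k V (\<lambda>l. M (i,l))))"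
      by (rule integral_mult_right_zero)
    also have "measure_pmf.expectation ?MM (\<lambda>M. \<Prod>i<n - k. exp (- lam * Xrow n k V (\<lambda>l. M (i,l))))
        = (measure_pmf.expectation ?Mr (\<lambda>r. exp (- lam * Xrow n k V r))) ^ (n - k)"
      by (rule rows_indep[OF finite_lessThan]) (simp only: Xrow_restrict)
    also have "exp (lam * c^2 * real n) = s ^ n"
    proof -
      have "exp (lam * c^2 * real n) = exp (real n * ln s)" using lc by (simp add: mult.commute)
      also have "\<dots> = exp (ln s) ^ n" by (rule exp_of_nat_mult)
      also have "\<dots> = s ^ n" using s1 by simp
      finally show ?thesis .
    qed
    also have "s ^ n * (measure_pmf.expectation ?Mr (\<lambda>r. exp (- lam * Xrow n k V r))) ^ (n - k) \<le> s ^ n * Q' ^ (n - k)"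
      using E0 E1 s1 by (intro mult_left_mono power_mono) auto
    also have "\<dots> \<le> R ^ n"
    proof -
      have "s ^ N1 \<le> s ^ n" using n s1 by (intro power_increasing) auto
      hence "1 / Q' ^ k < s ^ n" using N1 by linarith
      hence A: "1 \<le> s ^ n * Q' ^ k" using Q'pos by (simp add: field_simps)
      have "s ^ n * Q' ^ (n - k) = s ^ n * Q' ^ (n - k) * 1" by simp
      also have "\<dots> \<le> s ^ n * Q' ^ (n - k) * (s ^ n * Q' ^ k)"
        using A s1 Q'pos by (intro mult_left_mono) auto
      also have "\<dots> = (s^2 * Q') ^ n"
      proof -
        have e1: "Q' ^ (n - k) * Q' ^ k = Q' ^ n" using n by (simp add: power_add[symmetric])
        have "s ^ n * Q' ^ (n - k) * (s ^ n * Q' ^ k) = (s ^ n * s ^ n) * (Q' ^ (n - k) * Q' ^ k)"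
          by (simp only: mult_ac)
        also have "\<dots> = (s^2 * Q') ^ n" unfolding e1 by (simp add: power_mult_distrib power2_eq_square)
        finally show ?thesis .
      qed
      also have "\<dots> = R ^ n" using s2 by simp
      finally show ?thesis .
    qed
    also have "R ^ n = (1 - p + \<epsilon>) ^ (k * n)" unfolding R_def by (simp add: power_mult)
    finally show "measure_pmf.prob (ber_matrix_pmf (n - k) n p) {M. hs_norm_prod (n - k) n k M V \<le> c * sqrt (real n)}
        \<le> (1 - p + \<epsilon>) ^ (k * n)" .
  qed
qed


end
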